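(* Let $k=n^{1/6}$ (assumed to be an integer power of $2$), let $D=\{x\in\{0,\ldots,k-1\}^n:(\sum_i x_i)\bmod k=0\}$ and for $x\in D$ let $F(x)=\frac1k\big[(\sum_{i=1}^n x_i)\bmod 2k\big]\in\{0,1\}$. There is a constant $C$ such that every rectangle $R=A_1\times\cdots\times A_n$ with $A_i\subseteq\{0,\ldots,k-1\}$ for which at least $n^{5/6}$ of the sets $A_i$ have size at least $2$ has bias at most $C\,n^{-1/6}$.
   Context: A rectangle $R$ has bias at most $\delta$ if $|F^{-1}(1)\cap D\cap R|\le(1+\delta)|F^{-1}(0)\cap D\cap R|$ and $|F^{-1}(0)\cap D\cap R|\le(1+\delta)|F^{-1}(1)\cap D\cap R|$. *)

theory Defs
  imports Complex_Main "HOL-Library.FuncSet"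
begin

definition cube :: "nat \<Rightarrow> nat \<Rightarrow> (nat \<Rightarrow> nat) set" where
  "cube n k = PiE {0..<n} (\<lambda>_. {0..<k})"

definition domD :: "nat \<Rightarrow> nat \<Rightarrow> (nat \<Rightarrow> nat) set" where
  "domD n k = {x \<in> cube n k. (\<Sum>i<n. x i) mod k = 0}"

definition funF :: "nat \<Rightarrow> nat \<Rightarrow> (nat \<Rightarrow> nat) \<Rightarrow> nat" where
  "funF n k x = ((\<Sum>i<n. x i) mod (2 * k)) div k"

definition rect :: "nat \<Rightarrow> (nat \<Rightarrow> nat set) \<Rightarrow> (nat \<Rightarrow> nat) set" where
  "rect n A = PiE {0..<n} A"

definition bias_at_most ::
  "((nat \<Rightarrow> nat) \<Rightarrow> nat) \<Rightarrow> (nat \<Rightarrow> nat) set \<Rightarrow> (nat \<Rightarrow> nat) set \<Rightarrow> real \<Rightarrow> bool" where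
  "bias_at_most F D R \<delta> \<longleftrightarrow>
     real (card (F -` {1} \<inter> D \<inter> R)) \<le> (1 + \<delta>) * real (card (F -` {0} \<inter> D \<inter> R)) \<and>
     real (card (F -` {0} \<inter> D \<inter> R)) \<le> (1 + \<delta>) * real (card (F -` {1} \<inter> D \<inter> R))"

end

theory Submission
  imports Defs
begin



lemma leibniz_dec:
  fixes h :: "nat \<Rightarrow> real"
  assumes "\<And>i. h i \<ge> 0" "\<And>i j. i \<le> j \<Longrightarrow> h j \<le> h i"
  shows "0 \<le> (\<Sum>i<N. (-1)^i * h i) \<and> (\<Sum>i<N. (-1)^i * h i) \<le> h 0"
using assms proof (induction N arbitrary: h)
  case 0 thus ?case by simp
next
  case (Suc N)
  have IH: "0 \<le> (\<Sum>i<N. (-1)^i * h (Suc i)) \<and> (\<Sum>i<N. (-1)^i * h (Suc i)) \<le> h (Suc 0)"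
    using Suc.IH[of "\<lambda>i. h (Suc i)"] Suc.prems by auto
  have "(\<Sum>i<Suc N. (-1)^i * h i) = h 0 - (\<Sum>i<N. (-1)^i * h (Suc i))"
    by (subst sum.lessThan_Suc_shift) (simp add: sum_negf)
  then show ?case using IH Suc.prems(2)[of 0 "Suc 0"] by auto
qed

lemma alt_unimodal:
  fixes g :: "nat \<Rightarrow> real"
  assumes nn: "\<And>i. g i \<ge> 0" and B: "\<And>i. g i \<le> B"
    and inc: "\<And>i j. i \<le> j \<Longrightarrow> j < q \<Longrightarrow> g i \<le> g j"
    and dec: "\<And>i j. q \<le> i \<Longrightarrow> i \<le> j \<Longrightarrow> g j \<le> g i"
    and qN: "q \<le> N"
  shows "\<bar>\<Sum>i<N. (-1)^i * g i\<bar> \<le> B"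
proof -
  define X where "X = (\<Sum>i<q. (-1)^i * g i)"
  define Y where "Y = (\<Sum>i\<in>{q..<N}. (-1)^i * g i)"
  have split: "(\<Sum>i<N. (-1)^i * g i) = X + Y" unfolding X_def Y_def using qN
    by (metis atLeast0LessThan sum.atLeastLessThan_concat zero_le)
  have Y: "0 \<le> (-1)^q * Y \<and> (-1)^q * Y \<le> B"
  proof -
    have "Y = (\<Sum>i\<in>{0..<N-q}. (-1)^(i+q) * g (i+q))"
      unfolding Y_def using sum.shift_bounds_nat_ivl[of "\<lambda>i. (-1)^i * g i" 0 q "N-q"] qN by simp
    then have "(-1)^q * Y = (\<Sum>i<N-q. (-1)^i * g (q+i))"
      by (simp add: sum_distrib_left power_add atLeast0LessThan algebra_simps)
    moreover have "0 \<le> (\<Sum>i<N-q. (-1)^i * g (q+i)) \<and> (\<Sum>i<N-q. (-1)^i * g (q+i)) \<le> g (q+0)"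
      by (rule leibniz_dec) (auto intro: nn dec)
    ultimately show ?thesis using B[of q] by simp
  qed
  have X: "0 \<le> - ((-1)^q * X) \<and> - ((-1)^q * X) \<le> B"
  proof (cases q)
    case 0 thus ?thesis using B[of 0] nn[of 0] by (simp add: X_def)
  next
    case (Suc p)
    define hh where "hh i = (if i < q then g (p - i) else 0)" for i
    have "X = (\<Sum>i<q. (-1)^(q - Suc i) * g (q - Suc i))"
      unfolding X_def by (rule sum.nat_diff_reindex[symmetric])
    also have "\<dots> = (\<Sum>i<q. (-1)^(p - i) * hh i)" using Suc by (simp add: hh_def)
    finally have XX: "X = (\<Sum>i<q. (-1)^(p - i) * hh i)" .
    have "- ((-1)^q * X) = (-1)^p * X" using Suc by simp
    also have "\<dots> = (\<Sum>i<q. ((-1)^p * (-1)^(p - i)) * hh i)"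
      unfolding XX by (simp add: sum_distrib_left algebra_simps)
    also have "\<dots> = (\<Sum>i<q. (-1)^i * hh i)"
    proof (rule sum.cong)
      fix i assume "i \<in> {..<q}"
      then have "i \<le> p" using Suc by simp
      then have "(-1::real)^p * (-1)^(p - i) = (-1)^i"
      proof -
        have "(-1::real)^p = (-1)^(p-i) * (-1)^i" using \<open>i \<le> p\<close>
          by (metis le_add_diff_inverse2 power_add)
        moreover have "((-1::real)^(p-i)) * (-1)^(p-i) = 1" by (cases "even (p-i)") auto
        ultimately show ?thesis by (metis (no_types, lifting) mult.left_commute mult.right_neutral)
      qed
      then show "(-1)^p * (-1)^(p - i) * hh i = (-1)^i * hh i" by simp
    qed simp
    finally have eq: "- ((-1)^q * X) = (\<Sum>i<q. (-1)^i * hh i)" .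
    have "0 \<le> (\<Sum>i<q. (-1)^i * hh i) \<and> (\<Sum>i<q. (-1)^i * hh i) \<le> hh 0"
    proof (rule leibniz_dec)
      show "\<And>i. 0 \<le> hh i" by (simp add: hh_def nn)
      fix i j :: nat assume "i \<le> j"
      then show "hh j \<le> hh i" unfolding hh_def using Suc nn inc by auto
    qed
    then show ?thesis using eq B[of p] Suc by (simp add: hh_def)
  qed
  have "\<bar>X + Y\<bar> = \<bar>(-1)^q * (X + Y)\<bar>" by (simp add: abs_mult)
  also have "\<dots> = \<bar>(-1)^q * X + (-1)^q * Y\<bar>" by (simp add: algebra_simps)
  also have "\<dots> \<le> B" using X Y by linarith
  finally show ?thesis using split by simp
qed



lemma cb_rec: "(2*(Suc n) choose Suc n) * Suc n = 2*(2*n+1)*((2*n) choose n)"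
  by (metis (lifting) ext Suc_eq_plus1 Suc_times_binomial_add
    Suc_times_binomial_eq add_Suc_right add_Suc_shift mult.commute
    mult.left_commute mult_2)

lemma cb_bound: "(real ((2*n) choose n))^2 * (3*n+1) \<le> 16^n"
proof (induction n)
  case 0 then show ?case by simp
next
  case (Suc n)
  define c where "c = real ((2*n) choose n)"
  define c' where "c' = real ((2*Suc n) choose Suc n)"
  have rec: "c' * (n+1) = 2*(2*n+1)*c"
    unfolding c_def c'_def using cb_rec[of n] by (metis of_nat_mult of_nat_Suc Suc_eq_plus1 of_nat_add of_nat_numeral of_nat_1)
  have poly: "(2*real n+1)^2*(3*real n+4) \<le> 4*(real n+1)^2*(3*real n+1)"
    by (simp add: power2_eq_square algebra_simps)
  have "(c' * (n+1))^2 * (3*real n+4) = 4*c^2 * ((2*real n+1)^2*(3*real n+4))"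
    unfolding rec by (simp add: power2_eq_square algebra_simps)
  also have "\<dots> \<le> 4*c^2 * (4*(real n+1)^2*(3*real n+1))"
    using mult_left_mono[OF poly, of "4*c^2"] by simp
  also have "\<dots> = 16*(real n+1)^2 * (c^2*(3*real n+1))" by (simp add: algebra_simps)
  also have "\<dots> \<le> 16*(real n+1)^2 * 16^n"
    using Suc.IH unfolding c_def by (intro mult_left_mono) (simp_all add: algebra_simps)
  finally have F: "(c' * (n+1))^2 * (3*real n+4) \<le> 16*(real n+1)^2 * 16^n" .
  have E1: "(c' * (n+1))^2 * (3*real n+4) = (real n+1)^2 * (c'^2 * (3*real n+4))"
    by (simp add: power2_eq_square algebra_simps)
  have E2: "16*(real n+1)^2 * 16^n = (real n+1)^2 * 16^(Suc n)" by simp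
  have "(real n+1)^2 * (c'^2 * (3*real n+4)) \<le> (real n+1)^2 * 16^(Suc n)"
    using F unfolding E1 E2 .
  then have "c'^2 * (3*real n+4) \<le> 16^(Suc n)"
    by (rule mult_left_le_imp_le) auto
  moreover have R: "real (3*Suc n+1) = 3*real n+4" by simp
  ultimately have "c'^2 * real (3*Suc n+1) \<le> 16^(Suc n)" by (simp only: R)
  then show ?case by (simp only: c'_def)
qed

definition PQ :: "nat \<Rightarrow> nat \<Rightarrow> nat \<Rightarrow> real" where
  "PQ M h s = (\<Sum>i<M+1. real (M choose (s + i*h)))"
definition AQ :: "nat \<Rightarrow> nat \<Rightarrow> nat \<Rightarrow> real" where
  "AQ M h s = (\<Sum>i<M+1. (-1)^i * real (M choose (s + i*h)))"

lemma sum_ext_range: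
  fixes w :: "nat \<Rightarrow> real"
  assumes "h \<ge> 1" "T \<ge> M+1"
  shows "(\<Sum>i<T. w i * real (M choose (s+i*h))) = (\<Sum>i<M+1. w i * real (M choose (s+i*h)))"
proof -
  define F where "F i = w i * real (M choose (s+i*h))" for i
  have "(\<Sum>i<T. F i) = (\<Sum>i\<in>{0..<M+1}. F i) + (\<Sum>i\<in>{M+1..<T}. F i)"
    using sum.atLeastLessThan_concat[of 0 "M+1" T F] assms(2) by (simp add: atLeast0LessThan)
  then have "(\<Sum>i<T. w i * real (M choose (s+i*h))) = (\<Sum>i<M+1. w i * real (M choose (s+i*h)))
      + (\<Sum>i\<in>{M+1..<T}. w i * real (M choose (s+i*h)))"
    unfolding F_def by (simp add: atLeast0LessThan)
  moreover have "(\<Sum>i\<in>{M+1..<T}. w i * real (M choose (s+i*h))) = 0"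
  proof (rule sum.neutral, rule ballI)
    fix i assume "i \<in> {M+1..<T}"
    then have "i * h \<ge> (M+1) * 1" using assms(1) by (intro mult_mono) auto
    then have "M < s + i*h" by simp
    then show "w i * real (M choose (s+i*h)) = 0" by simp
  qed
  ultimately show ?thesis by simp
qed

lemma sum_ext_range':
  assumes "h \<ge> 1" "T \<ge> M+1"
  shows "(\<Sum>i<T. real (M choose (s+i*h))) = (\<Sum>i<M+1. real (M choose (s+i*h)))"
  using sum_ext_range[OF assms, of "\<lambda>_. 1"] by simp

lemma sum_even_odd:
  fixes f :: "nat \<Rightarrow> real"
  shows "(\<Sum>i<2*N. f i) = (\<Sum>u<N. f (2*u) + f (2*u+1))"
proof (induction N)
  case 0 show ?case by simp
next
  case (Suc N)
  have e: "2 * Suc N = Suc (Suc (2*N))" by simp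
  show ?case unfolding e sum.lessThan_Suc Suc.IH by simp
qed

lemma PQ_split:
  assumes "h \<ge> 1"
  shows "PQ M h s = PQ M (2*h) s + PQ M (2*h) (s+h)"
    and "AQ M h s = PQ M (2*h) s - PQ M (2*h) (s+h)"
proof -
  have e1: "s + 2*u*h = s + u*(2*h)" for u by (simp add: algebra_simps)
  have e2: "s + (2*u+1)*h = (s + h) + u*(2*h)" for u by (simp add: algebra_simps)
  have "PQ M h s = (\<Sum>i<2*(M+1). 1 * real (M choose (s+i*h)))"
    unfolding PQ_def mult_1 by (rule sum_ext_range'[OF assms, symmetric]) simp
  also have "\<dots> = (\<Sum>u<M+1. real (M choose (s + u*(2*h))) + real (M choose ((s + h) + u*(2*h))))"
    by (subst sum_even_odd) (simp only: e1 e2 mult_1)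
  also have "\<dots> = PQ M (2*h) s + PQ M (2*h) (s+h)" by (simp only: PQ_def sum.distrib)
  finally show "PQ M h s = PQ M (2*h) s + PQ M (2*h) (s+h)" .
  have "AQ M h s = (\<Sum>i<2*(M+1). (-1)^i * real (M choose (s+i*h)))"
    unfolding AQ_def by (rule sum_ext_range[OF assms, symmetric]) simp
  also have "\<dots> = (\<Sum>u<M+1. real (M choose (s + u*(2*h))) - real (M choose ((s + h) + u*(2*h))))"
    by (subst sum_even_odd) (simp only: e1 e2, simp)
  also have "\<dots> = PQ M (2*h) s - PQ M (2*h) (s+h)" by (simp only: PQ_def sum_subtractf)
  finally show "AQ M h s = PQ M (2*h) s - PQ M (2*h) (s+h)" .
qed


lemma AQ_bound:
  assumes h: "h \<ge> 1"
  shows "\<bar>AQ M h s\<bar> \<le> real (M choose (M div 2))"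
proof -
  define q where "q = (if s \<le> M div 2 then (M div 2 - s) div h + 1 else 0)"
  have "\<bar>\<Sum>i<M+1. (-1)^i * real (M choose (s+i*h))\<bar> \<le> real (M choose (M div 2))"
  proof (rule alt_unimodal[where q=q])
    show "\<And>i. 0 \<le> real (M choose (s+i*h))" by simp
    show "\<And>i. real (M choose (s+i*h)) \<le> real (M choose (M div 2))"
      by (simp add: binomial_maximum)
    show "q \<le> M+1" unfolding q_def using h
      by (simp add: div_le_dividend le_trans[OF div_le_dividend])
  next
    fix i j assume ij: "i \<le> j" "j < q"
    then have s: "s \<le> M div 2" and jq: "j \<le> (M div 2 - s) div h" unfolding q_def
      by (auto split: if_splits)
    have "j * h \<le> ((M div 2 - s) div h) * h" using jq by (rule mult_le_mono1)
    also have "\<dots> \<le> M div 2 - s" by (rule div_times_less_eq_dividend)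
    finally have jh: "j * h \<le> M div 2 - s" .
    have "2 * (M div 2) \<le> M" by simp
    moreover have "s + j*h \<le> M div 2" using s jh by (simp add: le_diff_conv2 add.commute)
    ultimately have "2 * (s + j*h) \<le> M" using mult_le_mono2[of "s+j*h" "M div 2" 2] by (rule_tac le_trans) auto
    moreover have "s + i*h \<le> s + j*h" using ij by simp
    ultimately show "real (M choose (s+i*h)) \<le> real (M choose (s+j*h))"
      by (simp add: binomial_mono)
  next
    fix i j assume ij: "q \<le> i" "i \<le> j"
    have lo: "M div 2 \<le> s + i*h"
    proof (cases "s \<le> M div 2")
      case True
      then have iq: "(M div 2 - s) div h + 1 \<le> i" using ij unfolding q_def by simp
      have "M div 2 - s < ((M div 2 - s) div h + 1) * h"
      proof -
        define m where "m = M div 2 - s"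
        have a: "m mod h < h" using h by simp
        have b: "m div h * h + m mod h = m" by (rule div_mult_mod_eq)
        have c: "(m div h + 1) * h = m div h * h + h" by (simp add: algebra_simps)
        show ?thesis unfolding m_def[symmetric] c using a b by linarith
      qed
      also have "\<dots> \<le> i * h" using iq by (rule mult_le_mono1)
      finally show ?thesis by linarith
    qed simp
    have le: "s + i*h \<le> s + j*h" using ij by simp
    show "real (M choose (s+j*h)) \<le> real (M choose (s+i*h))"
    proof (cases "s + j*h \<le> M")
      case True
      then show ?thesis using binomial_antimono[OF le lo True] by simp
    next
      case False
      then have z: "M choose (s+j*h) = 0" by (simp add: binomial_eq_0)
      show ?thesis unfolding z by simp
    qed
  qed
  then show ?thesis unfolding AQ_def .
qed

lemma PQ_lower:
  "s < 2^e \<Longrightarrow> PQ M (2^e) s \<ge> 2^M / 2^e - real (M choose (M div 2))"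
proof (induction e arbitrary: s)
  case 0
  then have "PQ M (2^0) s = 2^M"
    unfolding PQ_def by (simp add: lessThan_Suc_atMost choose_row_sum flip: of_nat_sum)
  then show ?case by simp
next
  case (Suc e)
  define h :: nat where "h = 2^e"
  have h1: "h \<ge> 1" unfolding h_def by simp
  have e2: "(2::nat)^(Suc e) = 2*h" unfolding h_def by simp
  define m0 where "m0 = real (M choose (M div 2))"
  show ?case
  proof (cases "s < h")
    case True
    have IH: "PQ M h s \<ge> 2^M / h - m0" using Suc.IH[of s] True unfolding h_def m0_def by simp
    have A: "\<bar>AQ M h s\<bar> \<le> m0" unfolding m0_def by (rule AQ_bound[OF h1])
    have "PQ M (2*h) s = (PQ M h s + AQ M h s)/2" using PQ_split[OF h1, of M s] by simp
    moreover have "(2::real)^M / (2*h) - m0 = ((2^M / h - m0) - m0)/2" by (simp add: field_simps)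
    ultimately have "PQ M (2*h) s \<ge> 2^M / (2*h) - m0" using IH A by simp
    then show ?thesis unfolding e2 m0_def h_def by simp
  next
    case False
    define s' where "s' = s - h"
    have s': "s' < h" "s = s' + h" using False Suc.prems e2 unfolding s'_def by auto
    have IH: "PQ M h s' \<ge> 2^M / h - m0" using Suc.IH[of s'] s' unfolding h_def m0_def by simp
    have A: "\<bar>AQ M h s'\<bar> \<le> m0" unfolding m0_def by (rule AQ_bound[OF h1])
    have "PQ M (2*h) s = (PQ M h s' - AQ M h s')/2" using PQ_split[OF h1, of M s'] s' by simp
    moreover have "(2::real)^M / (2*h) - m0 = ((2^M / h - m0) - m0)/2" by (simp add: field_simps)
    ultimately have "PQ M (2*h) s \<ge> 2^M / (2*h) - m0" using IH A by simp
    then show ?thesis unfolding e2 m0_def h_def by simp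
  qed
qed



lemma pow2_odd_decomp:
  fixes d :: nat assumes "d > 0" shows "\<exists>v od. d = 2^v * od \<and> odd od"
using assms proof (induction d rule: less_induct)
  case (less d)
  show ?case
  proof (cases "odd d")
    case True then show ?thesis by (intro exI[of _ 0] exI[of _ d]) simp
  next
    case False
    then have "d div 2 < d" "d div 2 > 0" using less.prems by auto
    then obtain v od where vo: "d div 2 = 2^v*od" "odd od" using less.IH by blast
    have "d = 2 * (d div 2)" using False by simp
    then have "d = 2^(Suc v) * od" using vo by simp
    then show ?thesis using vo by blast
  qed
qed

lemma reindex_prog:
  fixes F :: "nat \<Rightarrow> real"
  assumes h: "h \<ge> 1" and b0: "b0 < h" and supp: "\<And>b. F b \<noteq> 0 \<Longrightarrow> b mod h = b0"
    and big: "\<And>b. b > M \<Longrightarrow> F b = 0"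
  shows "(\<Sum>b\<le>M. F b) = (\<Sum>i<M+1. F (b0 + i*h))"
proof -
  define g where "g i = b0 + i*h" for i
  have inj: "inj_on g {..<M+1}" unfolding g_def inj_on_def using h by auto
  define U where "U = {..M} \<union> g ` {..<M+1}"
  have fU: "finite U" unfolding U_def by auto
  have 1: "(\<Sum>b\<le>M. F b) = (\<Sum>b\<in>U. F b)"
    by (rule sum.mono_neutral_left[OF fU]) (auto simp: U_def intro: big)
  have 2: "(\<Sum>b\<in>g ` {..<M+1}. F b) = (\<Sum>b\<in>U. F b)"
  proof (rule sum.mono_neutral_left[OF fU])
    show "g ` {..<M+1} \<subseteq> U" unfolding U_def by auto
    show "\<forall>b\<in>U - g ` {..<M+1}. F b = 0"
    proof
      fix b assume bU: "b \<in> U - g ` {..<M+1}"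
      show "F b = 0"
      proof (rule ccontr)
        assume nz: "F b \<noteq> 0"
        then have m: "b mod h = b0" by (rule supp)
        have "b \<le> M" using nz big not_le by blast
        have "b = g (b div h)" unfolding g_def using m div_mult_mod_eq[of b h] by simp
        moreover have "b div h < M+1" using \<open>b \<le> M\<close> div_le_dividend[of b h] by linarith
        ultimately show False using bU by auto
      qed
    qed
  qed
  have 3: "(\<Sum>i<M+1. F (b0 + i*h)) = (\<Sum>b\<in>g ` {..<M+1}. F b)"
    using sum.reindex[OF inj, of F] unfolding g_def by (simp add: comp_def)
  show ?thesis using 1 2 3 by simp
qed

fun gfun :: "int \<Rightarrow> int \<Rightarrow> nat \<Rightarrow> int \<Rightarrow> real" where
  "gfun W d 0 r = (if r mod W = 0 then 1 else 0)"
| "gfun W d (Suc M) r = gfun W d M r + gfun W d M (r - d)"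

lemma gfun_nonneg: "gfun W d M r \<ge> 0"
  by (induction M arbitrary: r) (auto intro: add_nonneg_nonneg)

lemma gfun_binom:
  "gfun W d M r = (\<Sum>b\<le>M. real (M choose b) * (if (r - d * int b) mod W = 0 then 1 else 0))"
proof (induction M arbitrary: r)
  case 0 then show ?case by simp
next
  case (Suc M)
  define \<phi> where "\<phi> r b = (if (r - d * int b) mod W = 0 then 1 else (0::real))" for r b
  have shift: "\<phi> (r - d) b = \<phi> r (Suc b)" for b unfolding \<phi>_def by (simp add: algebra_simps)
  have A: "(\<Sum>b\<le>M. real (M choose b) * \<phi> r b) = \<phi> r 0 + (\<Sum>b\<le>M. real (M choose Suc b) * \<phi> r (Suc b))"
  proof -
    have "(\<Sum>b\<le>M. real (M choose b) * \<phi> r b) = (\<Sum>b\<le>Suc M. real (M choose b) * \<phi> r b)" by simp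
    also have "\<dots> = \<phi> r 0 + (\<Sum>b\<le>M. real (M choose Suc b) * \<phi> r (Suc b))"
      by (subst sum.atMost_Suc_shift) simp
    finally show ?thesis .
  qed
  have B: "(\<Sum>b\<le>Suc M. real (Suc M choose b) * \<phi> r b) = \<phi> r 0 + (\<Sum>b\<le>M. real (M choose b) * \<phi> r (Suc b))
       + (\<Sum>b\<le>M. real (M choose Suc b) * \<phi> r (Suc b))"
    by (subst sum.atMost_Suc_shift) (simp add: algebra_simps sum.distrib)
  have "gfun W d (Suc M) r = gfun W d M r + gfun W d M (r - d)" by simp
  also have "\<dots> = (\<Sum>b\<le>M. real (M choose b) * \<phi> r b) + (\<Sum>b\<le>M. real (M choose b) * \<phi> (r - d) b)"
    using Suc.IH unfolding \<phi>_def by simp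
  also have "\<dots> = (\<Sum>b\<le>Suc M. real (Suc M choose b) * \<phi> r b)"
    unfolding A B shift by simp
  finally show ?case unfolding \<phi>_def .
qed



lemma gfun_ratio:
  fixes K j d M :: nat and r :: int
  assumes K: "K = 2^j" and d: "1 \<le> d" "d < K"
    and key: "real (M choose (M div 2)) * (real K^2 + 20*real K) \<le> 10 * 2^M"
  shows "gfun (2*int K) (int d) M r \<le> (1 + 20/real K) * gfun (2*int K) (int d) M (r + int K)"
proof -
  define m0 where "m0 = real (M choose (M div 2))"
  define G where "G = gfun (2*int K) (int d) M"
  have Kpos: "K > 0" using K by simp
  obtain v od where dv: "d = 2^v * od" and odd: "odd od" using pow2_odd_decomp[of d] d by auto
  have "od \<ge> 1" using odd by (cases od) auto
  then have "2^v \<le> d" using dv by simp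
  then have "(2::nat)^v < 2^j" using d K by linarith
  then have vj: "v < j" using power_strict_increasing_iff[of "2::nat" v j] by simp
  define h :: nat where "h = 2^(j-v)"
  have Kh: "K = 2^v * h" unfolding h_def K using vj by (simp flip: power_add)
  have dh: "d * h = od * K" using dv Kh by simp
  have h1: "h \<ge> 1" unfolding h_def by simp
  have hK: "h \<le> K" using Kh by simp
  have factB: "b mod h = b' mod h"
    if "(rr - int d * int b) mod int K = 0" "(rr - int d * int b') mod int K = 0" for b b' and rr :: int
  proof -
    have a: "int K dvd (rr - int d * int b)" using that(1) by (simp add: mod_0_imp_dvd)
    have b: "int K dvd (rr - int d * int b')" using that(2) by (simp add: mod_0_imp_dvd)
    have "int K dvd (rr - int d * int b) - (rr - int d * int b')" using a b by (rule dvd_diff)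
    moreover have "(rr - int d * int b) - (rr - int d * int b') = int d * (int b' - int b)" by (simp add: algebra_simps)
    ultimately have "int K dvd int d * (int b' - int b)" by simp
    then have "2^v * int h dvd 2^v * (int od * (int b' - int b))" using Kh dv by (simp add: algebra_simps)
    then have "int h dvd int od * (int b' - int b)" by simp
    moreover have "coprime (int h) (int od)" unfolding h_def using odd by simp
    ultimately have "int h dvd (int b' - int b)" by (simp add: coprime_dvd_mult_right_iff)
    then show ?thesis by (metis of_nat_mod mod_eq_dvd_iff of_nat_eq_iff)
  qed
  have shiftK: "(r - int d * int b) mod int K = (r - int d * int (b mod h)) mod int K" for b
  proof -
    have "d * b = d * (b mod h) + (d*h) * (b div h)" by (metis add_mult_distrib2 div_mult_mod_eq mult.assoc add.commute mult.commute)
    then have "int d * int b = int d * int (b mod h) + int K * (int od * int (b div h))"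
      unfolding dh by (metis (mono_tags) of_nat_add of_nat_mult mult.commute mult.left_commute)
    then have "r - int d * int b = (r - int d * int (b mod h)) + int K * (- int od * int (b div h))"
      by (simp add: algebra_simps)
    then show ?thesis by (simp only: mod_mult_self2)
  qed
  have K2: "x mod int K = 0" if "x mod (2*int K) = 0" for x :: int
    using that by (metis dvd_trans dvd_triv_right mod_0_imp_dvd dvd_imp_mod_0 mult.commute)
  show ?thesis
  proof (cases "\<exists>b0<h. (r - int d * int b0) mod int K = 0")
    case False
    have "G r = 0" unfolding G_def gfun_binom
    proof (rule sum.neutral, rule ballI)
      fix b assume "b \<in> {..M}"
      have "\<not> (r - int d * int b) mod (2*int K) = 0"
      proof
        assume "(r - int d * int b) mod (2*int K) = 0"
        then have "(r - int d * int b) mod int K = 0" by (rule K2)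
        then have "(r - int d * int (b mod h)) mod int K = 0" using shiftK by simp
        moreover have "b mod h < h" using h1 by simp
        ultimately show False using False by auto
      qed
      then show "real (M choose b) * (if (r - int d * int b) mod (2 * int K) = 0 then 1 else 0) = 0" by simp
    qed
    moreover have "0 \<le> (1 + 20/real K) * G (r + int K)" unfolding G_def by (simp add: gfun_nonneg)
    ultimately show ?thesis unfolding G_def by simp
  next
    case True
    then obtain b0 where b0: "b0 < h" "(r - int d * int b0) mod int K = 0" by auto
    define t where "t = (r - int d * int b0) div int K"
    have rt: "r - int d * int b0 = int K * t" using b0(2) unfolding t_def by (metis mult_div_mod_eq add_0_right)
    have expand: "int d * int (b0 + i*h) = int d * int b0 + int K * (int i * int od)" for i
    proof -
      have "d * (b0 + i*h) = d*b0 + i*(d*h)" by (simp add: algebra_simps)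
      then show ?thesis unfolding dh by (metis (mono_tags) of_nat_add of_nat_mult mult.commute mult.left_commute)
    qed
    have dvd2: "(int K * y) mod (2 * int K) = 0 \<longleftrightarrow> even y" for y :: int
      using Kpos by (simp add: mod_eq_0_iff_dvd mult.commute[of 2])
    have cond_r: "(r - int d * int (b0 + i*h)) mod (2*int K) = 0 \<longleftrightarrow> (even t \<longleftrightarrow> even i)" for i
    proof -
      have "r - int d * int (b0 + i*h) = (r - int d * int b0) - int K * (int i * int od)"
        unfolding expand by simp
      also have "\<dots> = int K * (t - int i * int od)" unfolding rt by (simp add: right_diff_distrib)
      finally have "r - int d * int (b0 + i*h) = int K * (t - int i * int od)" .
      then show ?thesis using dvd2 odd by simp
    qed
    have cond_rK: "(r + int K - int d * int (b0 + i*h)) mod (2*int K) = 0 \<longleftrightarrow> (even t \<longleftrightarrow> odd i)" for i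
    proof -
      have "r + int K - int d * int (b0 + i*h) = (r - int d * int b0) + int K - int K * (int i * int od)"
        unfolding expand by simp
      also have "\<dots> = int K * (t + 1 - int i * int od)" unfolding rt by (simp add: algebra_simps)
      finally have "r + int K - int d * int (b0 + i*h) = int K * (t + 1 - int i * int od)" .
      then show ?thesis using dvd2 odd by (cases "even t"; cases "even i") auto
    qed
    have reind: "G r' = (\<Sum>i<M+1. real (M choose (b0+i*h)) *
          (if (r' - int d * int (b0 + i*h)) mod (2*int K) = 0 then 1 else 0))"
      if r': "(r' - int d * int b0) mod int K = 0" for r'
      unfolding G_def gfun_binom
    proof (rule reindex_prog[OF h1 b0(1)])
      fix b
      assume "real (M choose b) * (if (r' - int d * int b) mod (2 * int K) = 0 then 1 else 0) \<noteq> 0"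
      then have "(r' - int d * int b) mod (2 * int K) = 0" by (simp split: if_splits)
      then have "(r' - int d * int b) mod int K = 0" by (rule K2)
      from factB[OF this r'] show "b mod h = b0" using b0(1) by simp
    next
      fix b assume "M < b" then show "real (M choose b) * (if (r' - int d * int b) mod (2 * int K) = 0 then 1 else 0) = 0"
        by simp
    qed
    have "r + int K - int d * int b0 = (r - int d * int b0) + int K * 1" by simp
    then have "(r + int K - int d * int b0) mod int K = 0" using b0(2) by (simp only: mod_mult_self2)
    then have GrK0: "G (r + int K) = (\<Sum>i<M+1. real (M choose (b0+i*h)) *
          (if (r + int K - int d * int (b0 + i*h)) mod (2*int K) = 0 then 1 else 0))"
      by (rule reind)
    have Gr: "G r = (\<Sum>i<M+1. real (M choose (b0+i*h)) * (if (even t \<longleftrightarrow> even i) then 1 else 0))"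
      unfolding reind[OF b0(2)] cond_r by simp
    have GrK: "G (r + int K) = (\<Sum>i<M+1. real (M choose (b0+i*h)) * (if (even t \<longleftrightarrow> odd i) then 1 else 0))"
      unfolding GrK0 cond_rK by simp
    have S: "G r + G (r + int K) = PQ M h b0"
      unfolding Gr GrK PQ_def sum.distrib[symmetric] by (rule sum.cong) auto
    have D: "\<bar>G r - G (r + int K)\<bar> = \<bar>AQ M h b0\<bar>"
    proof (cases "even t")
      case True
      have "G r - G (r + int K) = AQ M h b0"
        unfolding Gr GrK AQ_def sum_subtractf[symmetric] using True by (intro sum.cong) auto
      then show ?thesis by simp
    next
      case False
      have "G r - G (r + int K) = - AQ M h b0"
        unfolding Gr GrK AQ_def sum_subtractf[symmetric] sum_negf[symmetric] using False by (intro sum.cong) auto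
      then show ?thesis by simp
    qed
    have PL: "PQ M h b0 \<ge> 2^M / h - m0" unfolding m0_def h_def
      using PQ_lower[of b0 "j-v" M] b0(1) unfolding h_def by simp
    have AB: "\<bar>AQ M h b0\<bar> \<le> m0" unfolding m0_def by (rule AQ_bound[OF h1])
    have hK': "(2::real)^M / h \<ge> 2^M / K" using hK h1 by (intro divide_left_mono) auto
    have low: "G (r + int K) \<ge> 2^M / (2*K) - m0" using S D PL AB hK' by (simp add: field_simps) linarith?
    have m0K: "m0 \<le> 20 / real K * (2^M / (2*K) - m0)"
    proof -
      have "20 / real K * (2^M / (2*K) - m0) - m0 = (10 * 2^M - m0 * (real K^2 + 20 * real K)) / real K^2"
        using Kpos by (simp add: field_simps power2_eq_square)
      also have "\<dots> \<ge> 0" using key unfolding m0_def by simp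
      finally show ?thesis by simp
    qed
    have "G r \<le> G (r + int K) + m0" using D AB by linarith
    also have "\<dots> \<le> G (r + int K) + 20 / real K * G (r + int K)"
      using m0K low Kpos by (smt (verit) mult_left_mono divide_nonneg_nonneg of_nat_0_le_iff)
    finally show ?thesis unfolding G_def by (simp add: algebra_simps)
  qed
qed



definition cnt :: "nat \<Rightarrow> nat set \<Rightarrow> (nat \<Rightarrow> nat set) \<Rightarrow> int \<Rightarrow> real" where
  "cnt K I A r = real (card {x \<in> PiE I A. (int (\<Sum>i\<in>I. x i) - r) mod (2*int K) = 0})"

definition Pr :: "nat \<Rightarrow> real \<Rightarrow> (int \<Rightarrow> real) \<Rightarrow> bool" where
  "Pr K \<delta> f \<longleftrightarrow> (\<forall>r. f r \<le> (1+\<delta>) * f (r + int K))"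

lemma cnt_cong: "(\<And>i. i \<in> I \<Longrightarrow> A i = B i) \<Longrightarrow> cnt K I A = cnt K I B"
  unfolding cnt_def using PiE_cong[of I A B] by simp

lemma cnt_empty: "cnt K {} A r = (if r mod (2*int K) = 0 then 1 else 0)"
proof -
  have "(- r) mod (2*int K) = 0 \<longleftrightarrow> r mod (2*int K) = 0"
    by (simp add: mod_eq_0_iff_dvd)
  then show ?thesis unfolding cnt_def by simp
qed

lemma cnt_insert:
  assumes fI: "finite I" and iI: "i \<notin> I" and fA: "\<And>j. j \<in> insert i I \<Longrightarrow> finite (A j)"
  shows "cnt K (insert i I) A r = (\<Sum>a\<in>A i. cnt K I A (r - int a))"
proof -
  define P where "P x \<longleftrightarrow> (int (\<Sum>j\<in>insert i I. x j) - r) mod (2*int K) = 0" for x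
  define Q where "Q a g \<longleftrightarrow> (int (\<Sum>j\<in>I. g j) - (r - int a)) mod (2*int K) = 0" for a g
  define \<Phi> :: "nat \<times> (nat \<Rightarrow> nat) \<Rightarrow> (nat \<Rightarrow> nat)" where "\<Phi> = (\<lambda>(y, g). g(i := y))"
  have sumupd: "(\<Sum>j\<in>insert i I. (g(i := y)) j) = y + (\<Sum>j\<in>I. g j)" for g :: "nat \<Rightarrow> nat" and y
  proof -
    have "(\<Sum>j\<in>insert i I. (g(i := y)) j) = y + (\<Sum>j\<in>I. (g(i := y)) j)"
      using fI iI by simp
    also have "(\<Sum>j\<in>I. (g(i := y)) j) = (\<Sum>j\<in>I. g j)" using iI by (intro sum.cong) auto
    finally show ?thesis .
  qed
  have PQ: "P (g(i := y)) \<longleftrightarrow> Q y g" for g y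
    unfolding P_def Q_def sumupd by (simp add: algebra_simps)
  have eqset: "{x \<in> PiE (insert i I) A. P x} = \<Phi> ` (SIGMA a:A i. {g \<in> PiE I A. Q a g})"
  proof
    show "{x \<in> PiE (insert i I) A. P x} \<subseteq> \<Phi> ` (SIGMA a:A i. {g \<in> PiE I A. Q a g})"
    proof
      fix x assume x: "x \<in> {x \<in> PiE (insert i I) A. P x}"
      then have "x \<in> \<Phi> ` (A i \<times> PiE I A)" unfolding \<Phi>_def using PiE_insert_eq[of i I A] by simp
      then obtain y g where yg: "y \<in> A i" "g \<in> PiE I A" "x = g(i := y)" unfolding \<Phi>_def by auto
      then have "Q y g" using x PQ by auto
      then show "x \<in> \<Phi> ` (SIGMA a:A i. {g \<in> PiE I A. Q a g})" using yg unfolding \<Phi>_def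
        by (auto intro!: image_eqI[where x="(y, g)"])
    qed
    show "\<Phi> ` (SIGMA a:A i. {g \<in> PiE I A. Q a g}) \<subseteq> {x \<in> PiE (insert i I) A. P x}"
    proof
      fix x assume "x \<in> \<Phi> ` (SIGMA a:A i. {g \<in> PiE I A. Q a g})"
      then obtain y g where yg: "y \<in> A i" "g \<in> PiE I A" "Q y g" "x = g(i := y)" unfolding \<Phi>_def by auto
      then have "x \<in> PiE (insert i I) A" using PiE_fun_upd by simp
      moreover have "P x" using yg PQ by simp
      ultimately show "x \<in> {x \<in> PiE (insert i I) A. P x}" by simp
    qed
  qed
  have inj: "inj_on \<Phi> (SIGMA a:A i. {g \<in> PiE I A. Q a g})"
  proof -
    have "inj_on \<Phi> (A i \<times> PiE I A)" unfolding \<Phi>_def by (rule inj_combinator[OF iI])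
    then show ?thesis by (rule inj_on_subset) auto
  qed
  have fin: "finite (PiE I A)" using fI fA by (intro finite_PiE) auto
  have "card {x \<in> PiE (insert i I) A. P x} = card (SIGMA a:A i. {g \<in> PiE I A. Q a g})"
    unfolding eqset using inj by (rule card_image)
  also have "\<dots> = (\<Sum>a\<in>A i. card {g \<in> PiE I A. Q a g})"
    using fA fin by (intro card_SigmaI) auto
  finally show ?thesis unfolding cnt_def P_def Q_def by simp
qed

lemma Pr_insert:
  assumes "Pr K \<delta> (cnt K I A)" "1 + \<delta> \<ge> 0" "finite I" "i \<notin> I" "\<And>j. j \<in> insert i I \<Longrightarrow> finite (A j)"
  shows "Pr K \<delta> (cnt K (insert i I) A)"
  unfolding Pr_def
proof
  fix r
  have "cnt K (insert i I) A r = (\<Sum>a\<in>A i. cnt K I A (r - int a))" using assms by (intro cnt_insert) auto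
  also have "\<dots> \<le> (\<Sum>a\<in>A i. (1+\<delta>) * cnt K I A (r - int a + int K))"
    using assms(1) unfolding Pr_def by (intro sum_mono) auto
  also have "\<dots> = (1+\<delta>) * (\<Sum>a\<in>A i. cnt K I A (r + int K - int a))"
    by (simp add: sum_distrib_left algebra_simps)
  also have "(\<Sum>a\<in>A i. cnt K I A (r + int K - int a)) = cnt K (insert i I) A (r + int K)"
    using assms by (intro cnt_insert[symmetric]) auto
  finally show "cnt K (insert i I) A r \<le> (1+\<delta>) * cnt K (insert i I) A (r + int K)" .
qed

lemma Pr_extend:
  assumes "finite H" "finite G" "G \<inter> H = {}" "\<And>i. i \<in> G \<union> H \<Longrightarrow> finite (A i)"
    "Pr K \<delta> (cnt K G A)" "1 + \<delta> \<ge> 0"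
  shows "Pr K \<delta> (cnt K (G \<union> H) A)"
  using assms
proof (induction H rule: finite_induct)
  case empty then show ?case by simp
next
  case (insert x F)
  have "Pr K \<delta> (cnt K (G \<union> F) A)" using insert by auto
  moreover have "G \<union> insert x F = insert x (G \<union> F)" by auto
  moreover have "x \<notin> G \<union> F" using insert by auto
  ultimately show ?case using insert by (metis Pr_insert finite_UnI)
qed

lemma cnt_block:
  assumes "finite G" "\<And>i. i \<in> G \<Longrightarrow> A i = {a i, a i + d}" "d \<ge> 1"
  shows "cnt K G A r = gfun (2*int K) (int d) (card G) (r - int (\<Sum>i\<in>G. a i))"
  using assms
proof (induction G arbitrary: r rule: finite_induct)
  case empty then show ?case by (simp add: cnt_empty)
next
  case (insert x F)
  have ne: "a x \<noteq> a x + d" using insert by simp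
  have "cnt K (insert x F) A r = (\<Sum>y\<in>A x. cnt K F A (r - int y))"
    using insert by (intro cnt_insert) auto
  also have "\<dots> = cnt K F A (r - int (a x)) + cnt K F A (r - int (a x + d))"
    using insert ne by simp
  also have "\<dots> = gfun (2*int K) (int d) (card F) (r - int (a x) - int (\<Sum>i\<in>F. a i))
      + gfun (2*int K) (int d) (card F) (r - int (a x + d) - int (\<Sum>i\<in>F. a i))"
    using insert by simp
  also have "\<dots> = gfun (2*int K) (int d) (Suc (card F)) (r - int (\<Sum>i\<in>insert x F. a i))"
    using insert by (simp add: algebra_simps)
  finally show ?case using insert by simp
qed

lemma cnt_nonneg: "cnt K I A r \<ge> 0" unfolding cnt_def by simp



lemma key_ineq:
  assumes K: "K = 2^j" and j: "j \<ge> 1"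
  shows "real ((K^4) choose (K^4 div 2)) * (real K^2 + 20*real K) \<le> 10 * 2^(K^4)"
proof -
  define M where "M = K^4"
  define n where "n = M div 2"
  have "(2::nat)^1 \<le> 2^j" using j by (rule power_increasing) simp
  then have K2: "K \<ge> 2" using K by simp
  have "even K" using K j by (simp add: even_power)
  then have "even M" unfolding M_def by simp
  then have Mn: "M = 2*n" unfolding n_def by simp
  define m0 where "m0 = real (M choose (M div 2))"
  have cb: "m0^2 * (3*real n+1) \<le> 16^n" using cb_bound[of n] unfolding m0_def Mn by (simp add: add.commute)
  have e16a: "((2::real)^M)^2 = 2^(M*2)" by (simp add: power_mult)
  have e16b: "(2::real)^(4*n) = 16^n" by (simp add: power_mult)
  have "M*2 = 4*n" using Mn by simp
  then have e16: "(16::real)^n = (2^M)^2" using e16a e16b by simp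
  define x where "x = real K"
  have x2: "x \<ge> 2" using K2 unfolding x_def by simp
  have nx: "real n = x^4/2" using Mn unfolding x_def M_def by (simp add: of_nat_power[symmetric])
  have poly: "(x^2 + 20*x)^2 \<le> 100 * (3*real n + 1)"
  proof -
    have xx: "x*x \<ge> 2*x" using x2 by (intro mult_right_mono) auto
    have a: "149*x^2 \<ge> 40*x + 400" unfolding power2_eq_square using x2 xx by linarith
    have "x^2 * (40*x + 400) \<le> x^2 * (149*x^2)" using a by (intro mult_left_mono) auto
    then have "40*x^3 + 400*x^2 \<le> 149*x^4" by (simp add: power2_eq_square power3_eq_cube algebra_simps) (simp add: power_def)
    then show ?thesis unfolding nx by (simp add: power2_eq_square algebra_simps) (simp add: power_def)
  qed
  have "(m0 * (x^2 + 20*x))^2 = m0^2 * (x^2+20*x)^2" by (simp add: power_mult_distrib)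
  also have "\<dots> \<le> m0^2 * (100 * (3*real n + 1))" using poly by (intro mult_left_mono) auto
  also have "\<dots> = 100 * (m0^2 * (3*real n+1))" by simp
  also have "\<dots> \<le> 100 * (2^M)^2" using cb e16 by simp
  also have "\<dots> = (10 * 2^M)^2" by (simp add: power_mult_distrib)
  finally have "m0 * (x^2 + 20*x) \<le> 10 * 2^M" by (rule power2_le_imp_le) simp
  then show ?thesis unfolding m0_def x_def M_def .
qed



lemma cnt_mix:
  assumes fI: "finite I" and iI: "i \<in> I" and fA: "\<And>j. j \<in> I \<Longrightarrow> finite (A j)"
  shows "(2*real (card (A i)) - 2) * cnt K I A r
       = (\<Sum>a\<in>A i. \<Sum>b\<in>A i - {a}. cnt K I (A(i := {a,b})) r)"
proof -
  define I' where "I' = I - {i}"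
  have I: "I = insert i I'" "i \<notin> I'" "finite I'" using iI fI by (auto simp: I'_def)
  define g where "g x = cnt K I' A (r - int x)" for x
  define S where "S = A i"
  have fS: "finite S" using fA iI unfolding S_def by simp
  have c1: "cnt K I A r = (\<Sum>a\<in>S. g a)"
    unfolding g_def S_def using cnt_insert[of I' i A K r] I(2,3) fA unfolding I(1)[symmetric] by blast
  have c2: "cnt K I (A(i:={a,b})) r = g a + g b" if "a \<noteq> b" for a b
  proof -
    have "cnt K I (A(i:={a,b})) r = (\<Sum>y\<in>{a,b}. cnt K I' (A(i:={a,b})) (r - int y))"
      using cnt_insert[of I' i "A(i:={a,b})" K r] I(2,3) fA unfolding I(1)[symmetric] by simp
    also have "cnt K I' (A(i:={a,b})) = cnt K I' A" using I(2) by (intro cnt_cong) auto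
    finally show ?thesis using that unfolding g_def by (simp add: fun_upd_def)
  qed
  have "(\<Sum>a\<in>S. \<Sum>b\<in>S - {a}. cnt K I (A(i := {a,b})) r) = (\<Sum>a\<in>S. \<Sum>b\<in>S - {a}. g a + g b)"
    using c2 by (intro sum.cong) auto
  also have "\<dots> = (\<Sum>a\<in>S. (real (card S) - 1) * g a + ((\<Sum>b\<in>S. g b) - g a))"
  proof (rule sum.cong)
    fix a assume a: "a \<in> S"
    have "(\<Sum>b\<in>S - {a}. g a + g b) = real (card (S - {a})) * g a + (\<Sum>b\<in>S - {a}. g b)"
      by (simp add: sum.distrib)
    also have "real (card (S - {a})) = real (card S) - 1"
    proof -
      have "0 < card S" using a fS card_gt_0_iff[of S] by auto
      then show ?thesis using a fS by (simp add: card_Diff_singleton of_nat_diff)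
    qed
    also have "(\<Sum>b\<in>S - {a}. g b) = (\<Sum>b\<in>S. g b) - g a" using a fS by (simp add: sum_diff1)
    finally show "(\<Sum>b\<in>S - {a}. g a + g b) = (real (card S) - 1) * g a + ((\<Sum>b\<in>S. g b) - g a)" .
  qed simp
  also have "\<dots> = (real (card S) - 1) * (\<Sum>a\<in>S. g a) + (real (card S) * (\<Sum>b\<in>S. g b) - (\<Sum>a\<in>S. g a))"
    by (simp only: sum.distrib sum_subtractf sum_distrib_left[symmetric] sum_constant)
  also have "\<dots> = (2*real (card S) - 2) * (\<Sum>a\<in>S. g a)" by (simp add: algebra_simps)
  finally show ?thesis unfolding c1 S_def by simp
qed



lemma claim:
  fixes K j :: nat
  assumes K: "K = 2^j" and j: "j \<ge> 1"
  shows "finite I \<Longrightarrow> (\<forall>i\<in>I. A i \<subseteq> {0..<K}) \<Longrightarrow> K^5 \<le> card {i\<in>I. 2 \<le> card (A i)}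
         \<Longrightarrow> Pr K (20/real K) (cnt K I A)"
proof (induction "\<Sum>i\<in>I. card (A i)" arbitrary: A rule: less_induct)
  case (less A)
  have fA: "\<And>i. i \<in> I \<Longrightarrow> finite (A i)" using less.prems(2) finite_subset by blast
  have Kpos: "K > 0" using K by simp
  have d0: "1 + 20/real K \<ge> 0" by simp
  show ?case
  proof (cases "\<exists>i\<in>I. 3 \<le> card (A i)")
    case True
    then obtain i where i: "i \<in> I" "3 \<le> card (A i)" by auto
    define S where "S = A i"
    have IHab: "Pr K (20/real K) (cnt K I (A(i:={a,b})))" if ab: "a \<in> S" "b \<in> S" "a \<noteq> b" for a b
    proof (rule less.hyps)
      have s1: "(\<Sum>j\<in>I. card ((A(i:={a,b})) j)) = card ((A(i:={a,b})) i) + (\<Sum>j\<in>I-{i}. card ((A(i:={a,b})) j))"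
        using less.prems(1) i(1) by (rule sum.remove)
      have s2: "(\<Sum>j\<in>I-{i}. card ((A(i:={a,b})) j)) = (\<Sum>j\<in>I-{i}. card (A j))" by (intro sum.cong) auto
      have s3: "(\<Sum>j\<in>I. card (A j)) = card (A i) + (\<Sum>j\<in>I-{i}. card (A j))"
        using less.prems(1) i(1) by (rule sum.remove)
      show "(\<Sum>j\<in>I. card ((A(i:={a,b})) j)) < (\<Sum>j\<in>I. card (A j))"
        using s1 s2 s3 ab i(2) by simp
      show "finite I" by fact
      have "a < K" "b < K" using less.prems(2) ab i unfolding S_def by fastforce+
      then show "\<forall>j\<in>I. (A(i:={a,b})) j \<subseteq> {0..<K}" using less.prems(2) by auto
      have "{j\<in>I. 2 \<le> card ((A(i:={a,b})) j)} = {j\<in>I. 2 \<le> card (A j)}" using ab i unfolding S_def by auto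
      then show "K^5 \<le> card {j\<in>I. 2 \<le> card ((A(i:={a,b})) j)}" using less.prems(3) by simp
    qed
    show ?thesis unfolding Pr_def
    proof
      fix r
      define c where "c = 2*real (card S) - 2"
      have cpos: "c > 0" using i unfolding c_def S_def by simp
      have "c * cnt K I A r = (\<Sum>a\<in>S. \<Sum>b\<in>S-{a}. cnt K I (A(i:={a,b})) r)"
        unfolding c_def S_def by (rule cnt_mix[OF less.prems(1) i(1) fA])
      also have "\<dots> \<le> (\<Sum>a\<in>S. \<Sum>b\<in>S-{a}. (1 + 20/real K) * cnt K I (A(i:={a,b})) (r + int K))"
        using IHab unfolding Pr_def by (intro sum_mono) auto
      also have "\<dots> = (1 + 20/real K) * (\<Sum>a\<in>S. \<Sum>b\<in>S-{a}. cnt K I (A(i:={a,b})) (r + int K))"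
        by (simp add: sum_distrib_left)
      also have "(\<Sum>a\<in>S. \<Sum>b\<in>S-{a}. cnt K I (A(i:={a,b})) (r + int K)) = c * cnt K I A (r + int K)"
        unfolding c_def S_def by (rule cnt_mix[OF less.prems(1) i(1) fA, symmetric])
      finally have "c * cnt K I A r \<le> c * ((1 + 20/real K) * cnt K I A (r + int K))"
        by (simp add: algebra_simps)
      then show "cnt K I A r \<le> (1 + 20/real K) * cnt K I A (r + int K)" using cpos by simp
    qed
  next
    case False
    then have le2: "\<And>i. i \<in> I \<Longrightarrow> card (A i) \<le> 2" by force
    define G0 where "G0 = {i\<in>I. 2 \<le> card (A i)}"
    have G0I: "G0 \<subseteq> I" unfolding G0_def by auto
    have two: "card (A i) = 2" if iG0: "i \<in> G0" for i
    proof -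
      have "i \<in> I" "2 \<le> card (A i)" using iG0 unfolding G0_def by auto
      then show ?thesis using le2[of i] by linarith
    qed
    define lo where "lo i = Min (A i)" for i
    define dd where "dd i = Max (A i) - Min (A i)" for i
    have shape: "A i = {lo i, lo i + dd i} \<and> 1 \<le> dd i \<and> dd i < K" if iG: "i \<in> G0" for i
    proof -
      obtain x y where xy: "A i = {x,y}" "x \<noteq> y" using card_2_iff[THEN iffD1, OF two[OF iG]] by blast
      have "A i \<subseteq> {0..<K}" using less.prems(2) iG G0I by auto
      then have "x < K" "y < K" using xy by auto
      then show ?thesis using xy unfolding lo_def dd_def by (cases "x < y") (auto simp: min_def max_def)
    qed
    have "\<exists>dv\<in>{1..<K}. K^4 \<le> card {i\<in>G0. dd i = dv}"
    proof (rule ccontr)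
      assume "\<not> ?thesis"
      then have lt0: "\<And>dv. dv \<in> {1..<K} \<Longrightarrow> card {i\<in>G0. dd i = dv} < K^4" by (meson not_le)
      have lt: "\<And>dv. dv \<in> {1..<K} \<Longrightarrow> card {i\<in>G0. dd i = dv} \<le> K^4 - 1"
      proof -
        fix dv :: nat assume "dv \<in> {1..<K}"
        then have "card {i\<in>G0. dd i = dv} < K^4" by (rule lt0)
        then show "card {i\<in>G0. dd i = dv} \<le> K^4 - 1" by linarith
      qed
      have "G0 = (\<Union>dv\<in>{1..<K}. {i\<in>G0. dd i = dv})" using shape by auto
      then have "card G0 \<le> (\<Sum>dv\<in>{1..<K}. card {i\<in>G0. dd i = dv})"
        by (metis card_UN_le finite_atLeastLessThan)
      also have "\<dots> \<le> (\<Sum>dv\<in>{1..<K}. K^4 - 1)" using lt by (intro sum_mono) auto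
      also have "\<dots> = (K-1)*(K^4-1)" by simp
      also have "\<dots> \<le> K*(K^4-1)" by (rule mult_le_mono1) simp
      also have "\<dots> < K*K^4" using Kpos by simp
      also have "\<dots> = K^5" by (simp add: power_Suc[symmetric] del: power_Suc)
      finally show False using less.prems(3) unfolding G0_def by simp
    qed
    then obtain dv where dv: "dv \<in> {1..<K}" "K^4 \<le> card {i\<in>G0. dd i = dv}" by auto
    obtain G where G: "G \<subseteq> {i\<in>G0. dd i = dv}" "card G = K^4" "finite G"
      using obtain_subset_with_card_n[OF dv(2)] by metis
    have GI: "G \<subseteq> I" using G G0I by auto
    have Ashape: "\<And>i. i \<in> G \<Longrightarrow> A i = {lo i, lo i + dv}" using G shape by auto
    have blk: "cnt K G A r = gfun (2*int K) (int dv) (K^4) (r - int (\<Sum>i\<in>G. lo i))" for r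
      using cnt_block[OF G(3) Ashape] dv G by simp
    have PG: "Pr K (20/real K) (cnt K G A)" unfolding Pr_def
    proof
      fix r
      define c where "c = int (\<Sum>i\<in>G. lo i)"
      have GR: "gfun (2*int K) (int dv) (K^4) (r - c) \<le> (1 + 20/real K) * gfun (2*int K) (int dv) (K^4) (r - c + int K)"
        using dv by (intro gfun_ratio[OF K _ _ key_ineq[OF K j]]) auto
      have E: "r + int K - c = r - c + int K" by simp
      show "cnt K G A r \<le> (1 + 20/real K) * cnt K G A (r + int K)"
        unfolding blk c_def[symmetric] E by (rule GR)
    qed
    have "Pr K (20/real K) (cnt K (G \<union> (I - G)) A)"
      using less.prems(1) G(3) PG d0 fA GI by (intro Pr_extend) auto
    moreover have "G \<union> (I - G) = I" using GI by auto
    ultimately show ?thesis by simp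
  qed
qed

lemma nf1: assumes "(k::nat) > 0" shows "(S mod k = 0 \<and> S mod (2*k) div k = 1) \<longleftrightarrow> S mod (2*k) = k"
proof -
  define t where "t = S mod (2*k)"
  have tk: "t mod k = S mod k" unfolding t_def by (simp add: mod_mod_cancel)
  have dm: "t = k * (t div k) + t mod k" by simp
  show ?thesis unfolding t_def[symmetric]
  proof
    assume "S mod k = 0 \<and> t div k = 1"
    then show "t = k" using tk dm by simp
  next
    assume "t = k"
    then show "S mod k = 0 \<and> t div k = 1" using tk assms by simp
  qed
qed

lemma nf0: "(k::nat) > 0 \<Longrightarrow> (S mod k = 0 \<and> S mod (2*k) div k = 0) \<longleftrightarrow> S mod (2*k) = 0"
  by auto

lemma if1: assumes "(k::nat) > 0" shows "(int S - int k) mod (2*int k) = 0 \<longleftrightarrow> S mod (2*k) = k"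
proof -
  have "(int S - int k) mod (2*int k) = 0 \<longleftrightarrow> 2*int k dvd (int S - int k)"
    by (simp add: dvd_eq_mod_eq_0)
  also have "\<dots> \<longleftrightarrow> int S mod (2*int k) = int k mod (2*int k)"
    by (rule mod_eq_dvd_iff[symmetric])
  also have "int k mod (2*int k) = int k" using assms by simp
  also have "int S mod (2*int k) = int (S mod (2*k))" by (simp add: of_nat_mod)
  finally show ?thesis by simp
qed

lemma if0: "(int S - 0) mod (2*int k) = 0 \<longleftrightarrow> S mod (2*k) = 0"
proof -
  have "int S mod (2*int k) = int (S mod (2*k))" by (simp add: of_nat_mod)
  then show ?thesis by simp
qed

theorem lemma3:
  shows "\<exists>C::real. \<forall>n k :: nat. \<forall>A :: nat \<Rightarrow> nat set.
           (\<exists>j::nat. k = 2 ^ j) \<longrightarrow> n = k ^ 6 \<longrightarrow>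
           (\<forall>i<n. A i \<subseteq> {0..<k}) \<longrightarrow>
           real (card {i \<in> {0..<n}. card (A i) \<ge> 2}) \<ge> real n powr (5/6) \<longrightarrow>
           bias_at_most (funF n k) (domD n k) (rect n A) (C * real n powr (-1/6))"
proof (rule exI[of _ 20], intro allI impI)
  fix n k :: nat and A :: "nat \<Rightarrow> nat set"
  assume hj: "\<exists>j. k = 2^j" and hn: "n = k^6" and hA: "\<forall>i<n. A i \<subseteq> {0..<k}"
    and hc: "real (card {i\<in>{0..<n}. card (A i) \<ge> 2}) \<ge> real n powr (5/6)"
  obtain j where K: "k = 2^j" using hj by auto
  have kpos: "k > 0" using K by simp
  have k6: "real n = real k powr 6"
    using powr_realpow[of "real k" 6] kpos hn by simp
  have pow56: "real n powr (5/6) = real k ^ 5"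
  proof -
    have "real n powr (5/6) = real k powr (6 * (5/6))" unfolding k6 by (rule powr_powr)
    also have "\<dots> = real k powr 5" by simp
    also have "\<dots> = real k ^ 5" using powr_realpow[of "real k" 5] kpos by simp
    finally show ?thesis .
  qed
  have pow16: "real n powr (-1/6) = 1 / real k"
  proof -
    have "real n powr (-1/6) = real k powr (6 * (-1/6))" unfolding k6 by (rule powr_powr)
    also have "\<dots> = real k powr (-1)" by simp
    also have "\<dots> = 1 / real k" using kpos by (simp add: powr_neg_one)
    finally show ?thesis .
  qed
  have good: "k^5 \<le> card {i\<in>{0..<n}. 2 \<le> card (A i)}"
  proof -
    have "real (k^5) \<le> real (card {i\<in>{0..<n}. 2 \<le> card (A i)})" using hc pow56 by simp
    then show ?thesis by (simp only: of_nat_le_iff)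
  qed
  have j1: "j \<ge> 1"
  proof (rule ccontr)
    assume "\<not> j \<ge> 1"
    then have "k = 1" "n = 1" using K hn by auto
    have "card (A 0) \<le> card {0..<1::nat}" using hA \<open>k = 1\<close> \<open>n = 1\<close> by (intro card_mono) auto
    then have "{i\<in>{0..<n}. 2 \<le> card (A i)} = {}" using \<open>n = 1\<close> by auto
    then have "card {i\<in>{0..<n}. 2 \<le> card (A i)} = 0" by (simp only: card.empty)
    then show False using good \<open>k = 1\<close> by (simp only:) simp
  qed
  define I where "I = {0..<n}"
  have P: "Pr k (20/real k) (cnt k I A)"
    unfolding I_def by (rule claim[OF K j1]) (use hA good in auto)
  have R_cube: "rect n A \<subseteq> cube n k" unfolding rect_def cube_def using hA by (intro PiE_mono) auto
  have sumI: "(\<Sum>i<n. x i) = (\<Sum>i\<in>I. x i)" for x :: "nat \<Rightarrow> nat" unfolding I_def by (simp add: atLeast0LessThan)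
  have set1: "funF n k -` {1} \<inter> domD n k \<inter> rect n A = {x \<in> PiE I A. (int (\<Sum>i\<in>I. x i) - int k) mod (2*int k) = 0}"
  proof (rule set_eqI)
    fix x
    show "x \<in> funF n k -` {1} \<inter> domD n k \<inter> rect n A \<longleftrightarrow> x \<in> {x \<in> PiE I A. (int (\<Sum>i\<in>I. x i) - int k) mod (2*int k) = 0}"
      using R_cube nf1[OF kpos, of "\<Sum>i\<in>I. x i"] if1[OF kpos, of "\<Sum>i\<in>I. x i"]
      unfolding funF_def domD_def sumI rect_def[symmetric] I_def[symmetric]
      by (auto simp: rect_def I_def)
  qed
  have set0: "funF n k -` {0} \<inter> domD n k \<inter> rect n A = {x \<in> PiE I A. (int (\<Sum>i\<in>I. x i) - 0) mod (2*int k) = 0}"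
  proof (rule set_eqI)
    fix x
    show "x \<in> funF n k -` {0} \<inter> domD n k \<inter> rect n A \<longleftrightarrow> x \<in> {x \<in> PiE I A. (int (\<Sum>i\<in>I. x i) - 0) mod (2*int k) = 0}"
      using R_cube nf0[OF kpos, of "\<Sum>i\<in>I. x i"] if0[of "\<Sum>i\<in>I. x i" k]
      unfolding funF_def domD_def sumI rect_def[symmetric] I_def[symmetric]
      by (auto simp: rect_def I_def)
  qed
  have c1: "real (card (funF n k -` {1} \<inter> domD n k \<inter> rect n A)) = cnt k I A (int k)"
    unfolding set1 cnt_def ..
  have c0: "real (card (funF n k -` {0} \<inter> domD n k \<inter> rect n A)) = cnt k I A 0"
    unfolding set0 cnt_def ..
  have per: "cnt k I A (int k + int k) = cnt k I A 0"
  proof -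
    have "(y - (int k + int k)) mod (2*int k) = (y - 0) mod (2*int k)" for y :: int
    proof -
      have "y - (int k + int k) = (y - 0) + (2*int k) * (-1)" by simp
      then show ?thesis by (simp only: mod_mult_self2)
    qed
    then show ?thesis unfolding cnt_def by simp
  qed
  have "cnt k I A 0 \<le> (1 + 20/real k) * cnt k I A (0 + int k)" using P unfolding Pr_def by blast
  moreover have "cnt k I A (int k) \<le> (1 + 20/real k) * cnt k I A (int k + int k)" using P unfolding Pr_def by blast
  ultimately show "bias_at_most (funF n k) (domD n k) (rect n A) (20 * real n powr (-1/6))"
    unfolding bias_at_most_def c1 c0 pow16 per by simp
qed


end
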